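(* Let $(X,\tau_1,\tau_2)$ be a bitopological space, $i,j\in\{1,2\}$, $i\neq j$, which is $(i,j)$-almost regular, $(i,j)_1$-almost paralindelöf and a $j$-$P$-space. Then every cover $\mathcal U$ of $X$ by $(i,j)$-regular open sets has a refinement which is a cover of $X$, is $j$-locally countable, and consists of $(j,i)$-regular closed sets (sets $F$ with $F=j\text{-}\mathrm{cl}(i\text{-}\mathrm{int}(F))$).
   Context: $(X,\tau_1,\tau_2)$ is a bitopological space and $i,j\in\{1,2\}$, $i\neq j$. For $k\in\{1,2\}$, $k\text{-}\mathrm{int}$ and $k\text{-}\mathrm{cl}$ denote interior and closure with respect to $\tau_k$; "$k$-open" means $\tau_k$-open. A set $A$ is $(i,j)$-regular open if $A=i\text{-}\mathrm{int}(j\text{-}\mathrm{cl}(A))$. $X$ is $(i,j)$-almost regular if for each $x\in X$ and each $(i,j)$-regular open set $U$ containing $x$ there is an $(i,j)$-regular open set $V$ with $x\in V\subseteq j\text{-}\mathrm{cl}(V)\subseteq U$. A family $\mathcal V$ refines $\mathcal U$ if each member of $\mathcal V$ is contained in some member of $\mathcal U$; a family is a cover of $X$ if its union is $X$. A family is $k$-locally countable if every $x\in X$ has a $k$-open neighbourhood meeting at most countably many of its members. $X$ is a $k$-$P$-space if every intersection of countably many $k$-open sets is $k$-open. $X$ is $(i,j)_1$-almost paralindelöf if for every cover $\mathcal U$ of $X$ by $i$-open sets there is a $j$-locally countable family $\mathcal V$ of $i$-open sets refining $\mathcal U$ such that $X=\bigcup\{j\text{-}\mathrm{cl}(V):V\in\mathcal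 V\}$. *)

theory Defs
  imports "HOL-Analysis.Analysis"
begin

definition bitop :: "'a topology \<Rightarrow> 'a topology \<Rightarrow> nat \<Rightarrow> 'a topology" where
  "bitop T1 T2 k = (if k = 1 then T1 else T2)"

definition regular_open_ij :: "'a topology \<Rightarrow> 'a topology \<Rightarrow> 'a set \<Rightarrow> bool" where
  "regular_open_ij Ti Tj A \<longleftrightarrow> A = Ti interior_of (Tj closure_of A)"

definition regular_closed_ij :: "'a topology \<Rightarrow> 'a topology \<Rightarrow> 'a set \<Rightarrow> bool" where
  "regular_closed_ij Ti Tj F \<longleftrightarrow> F = Ti closure_of (Tj interior_of F)"

definition almost_regular_ij :: "'a topology \<Rightarrow> 'a topology \<Rightarrow> bool" where
  "almost_regular_ij Ti Tj \<longleftrightarrow>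
     (\<forall>x \<in> topspace Ti. \<forall>U. regular_open_ij Ti Tj U \<and> x \<in> U \<longrightarrow>
        (\<exists>V. regular_open_ij Ti Tj V \<and> x \<in> V \<and> V \<subseteq> Tj closure_of V \<and> Tj closure_of V \<subseteq> U))"

definition refines :: "'a set set \<Rightarrow> 'a set set \<Rightarrow> bool" where
  "refines \<V> \<U> \<longleftrightarrow> (\<forall>V\<in>\<V>. \<exists>U\<in>\<U>. V \<subseteq> U)"

definition locally_countable :: "'a topology \<Rightarrow> 'a set set \<Rightarrow> bool" where
  "locally_countable T \<V> \<longleftrightarrow>
     (\<forall>x \<in> topspace T. \<exists>W. openin T W \<and> x \<in> W \<and> countable {V \<in> \<V>. V \<inter> W \<noteq> {}})"

definition P_space :: "'a topology \<Rightarrow> bool" where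
  "P_space T \<longleftrightarrow> (\<forall>\<G>. countable \<G> \<and> \<G> \<noteq> {} \<and> (\<forall>G\<in>\<G>. openin T G) \<longrightarrow> openin T (\<Inter>\<G>))"

definition almost_paralindelof_ij :: "'a topology \<Rightarrow> 'a topology \<Rightarrow> bool" where
  "almost_paralindelof_ij Ti Tj \<longleftrightarrow>
     (\<forall>\<U>. (\<forall>U\<in>\<U>. openin Ti U) \<and> \<Union>\<U> = topspace Ti \<longrightarrow>
        (\<exists>\<V>. (\<forall>V\<in>\<V>. openin Ti V) \<and> refines \<V> \<U> \<and> locally_countable Tj \<V> \<and>
             topspace Ti = \<Union>{Tj closure_of V | V. V \<in> \<V>}))"

end

theory Submission
  imports Defs
begin

lemma main_gen:
  fixes Ti Tj :: "'a topology"
  assumes top: "topspace Ti = topspace Tj"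
    and ar: "almost_regular_ij Ti Tj"
    and apl: "almost_paralindelof_ij Ti Tj"
    and ro: "\<forall>U\<in>\<U>. regular_open_ij Ti Tj U"
    and cov: "\<Union>\<U> = topspace Ti"
  shows "\<exists>\<F>. refines \<F> \<U> \<and> \<Union>\<F> = topspace Ti \<and>
             locally_countable Tj \<F> \<and>
             (\<forall>F\<in>\<F>. regular_closed_ij Tj Ti F)"
proof -
  define \<W> where "\<W> = {V. openin Ti V \<and> (\<exists>U\<in>\<U>. Tj closure_of V \<subseteq> U)}"
  have Wop: "\<forall>V\<in>\<W>. openin Ti V" by (simp add: \<W>_def)
  have Wcov: "\<Union>\<W> = topspace Ti"
  proof
    show "\<Union>\<W> \<subseteq> topspace Ti" using Wop openin_subset by blast
    show "topspace Ti \<subseteq> \<Union>\<W>"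
    proof
      fix x assume x: "x \<in> topspace Ti"
      then obtain U where U: "U \<in> \<U>" "x \<in> U" using cov by blast
      then obtain V where V: "regular_open_ij Ti Tj V" "x \<in> V" "Tj closure_of V \<subseteq> U"
        using ar x ro unfolding almost_regular_ij_def by blast
      have "openin Ti V" using V(1) unfolding regular_open_ij_def
        by (metis openin_interior_of)
      then have "V \<in> \<W>" using V U unfolding \<W>_def by blast
      then show "x \<in> \<Union>\<W>" using V by blast
    qed
  qed
  obtain \<V> where Vop: "\<forall>V\<in>\<V>. openin Ti V" and Vref: "refines \<V> \<W>"
    and Vlc: "locally_countable Tj \<V>" and Vcov: "topspace Ti = \<Union>{Tj closure_of V | V. V \<in> \<V>}"
  proof -
    have "(\<forall>U\<in>\<W>. openin Ti U) \<and> \<Union>\<W> = topspace Ti" using Wop Wcov by blast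
    then have "\<exists>\<V>. (\<forall>V\<in>\<V>. openin Ti V) \<and> refines \<V> \<W> \<and> locally_countable Tj \<V> \<and>
             topspace Ti = \<Union>{Tj closure_of V | V. V \<in> \<V>}"
      by (rule mp[OF spec[OF apl[unfolded almost_paralindelof_ij_def]]])
    then show ?thesis using that by (elim exE conjE) 
  qed
  define \<F> where "\<F> = (\<lambda>V. Tj closure_of V) ` \<V>"
  have Feq: "{Tj closure_of V | V. V \<in> \<V>} = \<F>" unfolding \<F>_def by blast
  have "refines \<F> \<U>"
    unfolding refines_def \<F>_def
  proof
    fix F assume "F \<in> (\<lambda>V. Tj closure_of V) ` \<V>"
    then obtain V where V: "V \<in> \<V>" "F = Tj closure_of V" by blast
    then obtain W where W: "W \<in> \<W>" "V \<subseteq> W" using Vref unfolding refines_def by blast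
    then obtain U where "U \<in> \<U>" "Tj closure_of W \<subseteq> U" unfolding \<W>_def by blast
    moreover have "F \<subseteq> Tj closure_of W" using V W(2) closure_of_mono by simp
    ultimately show "\<exists>U\<in>\<U>. F \<subseteq> U" by (meson order_trans)
  qed
  moreover have "\<Union>\<F> = topspace Ti" using Vcov Feq by argo
  moreover have "locally_countable Tj \<F>"
    unfolding locally_countable_def
  proof
    fix x assume x: "x \<in> topspace Tj"
    have "\<exists>W. openin Tj W \<and> x \<in> W \<and> countable {V \<in> \<V>. V \<inter> W \<noteq> {}}"
      by (rule bspec[OF Vlc[unfolded locally_countable_def] x])
    then obtain W where W: "openin Tj W" "x \<in> W" "countable {V \<in> \<V>. V \<inter> W \<noteq> {}}"
      by blast
    have "{F \<in> \<F>. F \<inter> W \<noteq> {}} \<subseteq> (\<lambda>V. Tj closure_of V) ` {V \<in> \<V>. V \<inter> W \<noteq> {}}"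
    proof
      fix F assume "F \<in> {F \<in> \<F>. F \<inter> W \<noteq> {}}"
      then have F: "F \<in> \<F>" "F \<inter> W \<noteq> {}" by simp_all
      obtain V where V: "V \<in> \<V>" "F = Tj closure_of V"
        using F(1) unfolding \<F>_def by blast
      have "W \<inter> Tj closure_of V \<noteq> {}" using F(2) V(2) by (simp add: Int_commute)
      then have "W \<inter> V \<noteq> {}" by (simp add: openin_Int_closure_of_eq_empty[OF W(1)])
      then have "V \<inter> W \<noteq> {}" by (simp add: Int_commute)
      then show "F \<in> (\<lambda>V. Tj closure_of V) ` {V \<in> \<V>. V \<inter> W \<noteq> {}}" using V by blast
    qed
    then have "countable {F \<in> \<F>. F \<inter> W \<noteq> {}}"
      by (rule countable_subset[OF _ countable_image[OF W(3)]])
    then show "\<exists>W. openin Tj W \<and> x \<in> W \<and> countable {V \<in> \<F>. V \<inter> W \<noteq> {}}"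
      using W(1,2) by (intro exI[of _ W]) simp
  qed
  moreover have "\<forall>F\<in>\<F>. regular_closed_ij Tj Ti F"
    unfolding \<F>_def regular_closed_ij_def
  proof
    fix F assume "F \<in> (\<lambda>V. Tj closure_of V) ` \<V>"
    then obtain V where V: "V \<in> \<V>" "F = Tj closure_of V" by blast
    have op: "openin Ti V" using V Vop by blast
    have "V \<subseteq> Tj closure_of V" using closure_of_subset openin_subset[OF op] top by simp
    then have "V \<subseteq> Ti interior_of (Tj closure_of V)" using interior_of_maximal op by blast
    then have "Tj closure_of V \<subseteq> Tj closure_of (Ti interior_of (Tj closure_of V))"
      by (rule closure_of_mono)
    moreover have "Tj closure_of (Ti interior_of (Tj closure_of V)) \<subseteq> Tj closure_of V"
      by (metis closure_of_closure_of closure_of_mono interior_of_subset)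
    ultimately show "F = Tj closure_of (Ti interior_of F)" using V by blast
  qed
  ultimately show ?thesis by (intro exI[of _ \<F>]) simp
qed

theorem mainTheorem13:
  fixes T1 T2 :: "'a topology" and i j :: nat
  assumes "topspace T1 = topspace T2"
    and "i \<in> {1,2}" and "j \<in> {1,2}" and "i \<noteq> j"
    and "almost_regular_ij (bitop T1 T2 i) (bitop T1 T2 j)"
    and "almost_paralindelof_ij (bitop T1 T2 i) (bitop T1 T2 j)"
    and "P_space (bitop T1 T2 j)"
    and "\<forall>U\<in>\<U>. regular_open_ij (bitop T1 T2 i) (bitop T1 T2 j) U"
    and "\<Union>\<U> = topspace T1"
  shows "\<exists>\<F>. refines \<F> \<U> \<and> \<Union>\<F> = topspace T1 \<and>
             locally_countable (bitop T1 T2 j) \<F> \<and>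
             (\<forall>F\<in>\<F>. regular_closed_ij (bitop T1 T2 j) (bitop T1 T2 i) F)"
proof -
  have t: "topspace (bitop T1 T2 k) = topspace T1" for k
    using assms(1) by (simp add: bitop_def)
  show ?thesis
    using main_gen[of "bitop T1 T2 i" "bitop T1 T2 j" \<U>] assms t by simp
qed

end
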